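(* Let $\gamma\in(0,1)$ and, for each $N$, let $\omega$ have law $\mathbb{P}^{(N)}$ as in the context. Then for all $\beta\ge0$ and $h\in\mathbb{R}$, $$\mathbb{E}^{(N)}\Big[\frac1N\log Z_{N,\beta,h,\omega}\Big]\xrightarrow[N\to\infty]{}F(\beta,h):=\begin{cases}0 & \text{if } h\le-\beta,\\ \frac{F(h+\beta)}{2} & \text{if } -\beta<h<\beta,\\ \frac{F(h+\beta)+F(h-\beta)}{2} & \text{if } h\ge\beta.\end{cases}$$
   Context: Let $\tau=(\tau_n)_{n\ge0}$ be a renewal process with $\tau_0=0$ and interarrival law $K(n)=L(n)n^{-(1+\alpha)}$, $n\ge1$, where $\alpha\ge0$, $L:\mathbb{N}\to(0,\infty)$ is slowly varying and $\sum_nK(n)=1$; $\delta_n=\mathbf 1_{\{n\in\tau\}}$, $E$ denotes expectation over $\tau$. For $\omega$ independent of $\tau$, $Z_{N,\beta,h,\omega}=E\big[\exp\big(\sum_{n=1}^N(\beta\omega_n+h)\delta_n\big)\delta_N\big]$. The homogeneous free energy is $F(h):=\lim_{N\to\infty}\frac1N\log E\big[\exp\big(h\sum_{n=1}^N\delta_n\big)\delta_N\big]$ (which exists, is $\ge0$, and vanishes iff $h\le0$). $\mathbb{P}^{(N)}$ is the law of the stationary Markov chain $\omega=(\omega_n)_{n\ge0}$ on $\{-1,+1\}$ with transition matrix $Q^{(N)}=\begin{pmatrix}1-N^{-\gamma}&N^{-\gamma}\\N^{-\gamma}&1-N^{-\gamma}\end{pmatrix}$ and initial distribution $(1/2,1/2)$;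 $\mathbb{E}^{(N)}$ is the corresponding expectation. *)

theory Defs
  imports "HOL-Analysis.Analysis"
begin

definition slowly_varying :: "(nat \<Rightarrow> real) \<Rightarrow> bool" where
  "slowly_varying L \<longleftrightarrow> (\<forall>n. L n > 0) \<and>
     (\<forall>c::real. c > 0 \<longrightarrow> ((\<lambda>n. L (nat \<lfloor>c * real n\<rfloor>) / L n) \<longlonglongrightarrow> 1))"

definition prev_ren :: "nat set \<Rightarrow> nat \<Rightarrow> nat" where
  "prev_ren A n = Max (insert 0 {m \<in> A. m < n})"

(* Renewal configurations on {1..N} that contain N (this encodes the factor delta_N). *)
definition ren_configs :: "nat \<Rightarrow> nat set set" where
  "ren_configs N = {A. A \<subseteq> {1..N} \<and> N \<in> A}"

(* Probability under the renewal law with interarrival law K that tau \<inter> {1..N} = A. *)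
definition ren_weight :: "(nat \<Rightarrow> real) \<Rightarrow> nat set \<Rightarrow> real" where
  "ren_weight K A = (\<Prod>n\<in>A. K (n - prev_ren A n))"

(* Z_{N,beta,h,omega} = E[exp(sum_{n=1}^N (beta omega_n + h) delta_n) delta_N] *)
definition Zpin :: "(nat \<Rightarrow> real) \<Rightarrow> nat \<Rightarrow> real \<Rightarrow> real \<Rightarrow> (nat \<Rightarrow> real) \<Rightarrow> real" where
  "Zpin K N \<beta> h \<omega> = (\<Sum>A\<in>ren_configs N. ren_weight K A * exp (\<Sum>n\<in>A. \<beta> * \<omega> n + h))"

(* homogeneous partition function E[exp(h sum delta_n) delta_N] *)
definition Zhom :: "(nat \<Rightarrow> real) \<Rightarrow> nat \<Rightarrow> real \<Rightarrow> real" where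
  "Zhom K N h = (\<Sum>A\<in>ren_configs N. ren_weight K A * exp (h * real (card A)))"

definition Fhom :: "(nat \<Rightarrow> real) \<Rightarrow> real \<Rightarrow> real" where
  "Fhom K h = lim (\<lambda>N. ln (Zhom K N h) / real N)"

definition Qmat :: "real \<Rightarrow> nat \<Rightarrow> real \<Rightarrow> real \<Rightarrow> real" where
  "Qmat \<gamma> N x y = (if x = y then 1 - real N powr (-\<gamma>) else real N powr (-\<gamma>))"

(* E^{(N)}[g(omega)] for g depending on omega_0..omega_N: stationary chain, initial law (1/2,1/2) *)
definition EN :: "real \<Rightarrow> nat \<Rightarrow> ((nat \<Rightarrow> real) \<Rightarrow> real) \<Rightarrow> real" where
  "EN \<gamma> N g = (\<Sum>\<omega>\<in>PiE {0..N} (\<lambda>_. {-1, 1}).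
       (1/2) * (\<Prod>i\<in>{1..N}. Qmat \<gamma> N (\<omega> (i - 1)) (\<omega> i)) * g \<omega>)"

definition Fquenched :: "(nat \<Rightarrow> real) \<Rightarrow> real \<Rightarrow> real \<Rightarrow> real" where
  "Fquenched K \<beta> h =
     (if h \<le> -\<beta> then 0
      else if h < \<beta> then Fhom K (h + \<beta>) / 2
      else (Fhom K (h + \<beta>) + Fhom K (h - \<beta>)) / 2)"

end

theory Submission
  imports Defs "HOL-Real_Asymp.Real_Asymp"
begin


fun zr :: "(nat \<Rightarrow> real) \<Rightarrow> (nat \<Rightarrow> real) \<Rightarrow> nat \<Rightarrow> real" where
  "zr K v 0 = 1"
| "zr K v (Suc n) = (\<Sum>m\<le>n. zr K v m * K (Suc n - m)) * exp (v (Suc n))"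

lemma zr_pos:
  assumes "\<And>j. j \<ge> 1 \<Longrightarrow> K j > 0"
  shows "zr K v n > 0"
proof (induction n rule: less_induct)
  case (less n)
  show ?case
  proof (cases n)
    case 0 then show ?thesis by simp
  next
    case (Suc n')
    have "(\<Sum>m\<le>n'. zr K v m * K (Suc n' - m)) > 0"
    proof (rule sum_pos)
      show "\<And>i. i \<in> {..n'} \<Longrightarrow> 0 < zr K v i * K (Suc n' - i)"
        using less Suc assms by (intro mult_pos_pos) auto
    qed auto
    then show ?thesis using Suc by simp
  qed
qed

lemma zr_cong:
  assumes "\<And>i. 1 \<le> i \<Longrightarrow> i \<le> n \<Longrightarrow> v i = w i"
  shows "zr K v n = zr K w n"
  using assms
proof (induction n rule: less_induct)
  case (less n)
  show ?case
  proof (cases n)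
    case 0 then show ?thesis by simp
  next
    case (Suc n')
    have "zr K v m = zr K w m" if "m \<le> n'" for m
      using less.IH[of m] less.prems Suc that by auto
    moreover have "v (Suc n') = w (Suc n')" using less.prems Suc by auto
    ultimately show ?thesis using Suc by simp
  qed
qed

lemma zr_alt:
  assumes "n \<ge> 1"
  shows "zr K v n = (\<Sum>m<n. zr K v m * K (n - m)) * exp (v n)"
proof -
  obtain n' where n: "n = Suc n'" using assms by (cases n) auto
  show ?thesis unfolding n by (simp add: lessThan_Suc_atMost)
qed

definition C0 :: "nat \<Rightarrow> nat set set" where
  "C0 m = {A. A \<subseteq> {1..m} \<and> Max (insert 0 A) = m}"

definition H :: "(nat \<Rightarrow> real) \<Rightarrow> (nat \<Rightarrow> real) \<Rightarrow> nat \<Rightarrow> real" where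
  "H K v m = (\<Sum>A\<in>C0 m. ren_weight K A * exp (\<Sum>n\<in>A. v n))"

lemma C0_finite: "finite (C0 m)"
  unfolding C0_def by (rule finite_subset[of _ "Pow {1..m}"]) auto

lemma C0_0: "C0 0 = {{}}"
  unfolding C0_def by auto

lemma C0_pos: assumes m1: "m \<ge> 1" shows "C0 m = ren_configs m"
proof -
  have "m \<in> A" if "A \<subseteq> {1..m}" "Max (insert 0 A) = m" for A
  proof -
    have "finite A" using \<open>A \<subseteq> {1..m}\<close> finite_subset by blast
    then have "Max (insert 0 A) \<in> insert 0 A" by (intro Max_in) auto
    then show ?thesis using that m1 by auto
  qed
  moreover have "Max (insert 0 A) = m" if "A \<subseteq> {1..m}" "m \<in> A" for A
  proof -
    have "finite A" using \<open>A \<subseteq> {1..m}\<close> finite_subset by blast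
    then show ?thesis using that by (intro Max_eqI) auto
  qed
  ultimately show ?thesis unfolding C0_def ren_configs_def by blast
qed

lemma C0_sub: "A \<in> C0 m \<Longrightarrow> A \<subseteq> {1..m}" unfolding C0_def by auto

lemma C0_lt: "A \<in> C0 m \<Longrightarrow> a \<in> A \<Longrightarrow> a \<le> m" unfolding C0_def by auto

lemma C0_decomp:
  "C0 (Suc n) = (\<lambda>(m, A). insert (Suc n) A) ` (SIGMA m:{..n}. C0 m)"
proof (intro set_eqI iffI)
  fix B assume B: "B \<in> C0 (Suc n)"
  have fin: "finite B" using C0_sub[OF B] finite_subset by blast
  have SnB: "Suc n \<in> B" using B C0_pos[of "Suc n"] unfolding ren_configs_def by auto
  let ?A = "B - {Suc n}"
  let ?m = "Max (insert 0 ?A)"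
  have finA: "finite ?A" using fin by auto
  have "?m \<le> n"
    using C0_sub[OF B] finA by (subst Max_le_iff) auto
  moreover have "?A \<in> C0 ?m"
  proof -
    have "x \<in> {1..?m}" if "x \<in> ?A" for x
    proof -
      have "x \<ge> 1" using C0_sub[OF B] that by auto
      moreover have "x \<le> ?m" using finA that by (intro Max_ge) auto
      ultimately show ?thesis by auto
    qed
    then show ?thesis unfolding C0_def by blast
  qed
  moreover have "B = insert (Suc n) ?A" using SnB by auto
  ultimately show "B \<in> (\<lambda>(m, A). insert (Suc n) A) ` (SIGMA m:{..n}. C0 m)"
    by (intro image_eqI[of _ _ "(?m, ?A)"]) auto
next
  fix B assume "B \<in> (\<lambda>(m, A). insert (Suc n) A) ` (SIGMA m:{..n}. C0 m)"
  then obtain m A where m: "m \<le> n" and A: "A \<in> C0 m" and B: "B = insert (Suc n) A" by auto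
  have "A \<subseteq> {1..n}" using C0_sub[OF A] m by auto
  then have "B \<subseteq> {1..Suc n}" using B by auto
  moreover have "Suc n \<in> B" using B by auto
  ultimately show "B \<in> C0 (Suc n)" using C0_pos[of "Suc n"] unfolding ren_configs_def by auto
qed

lemma C0_inj:
  "inj_on (\<lambda>(m, A). insert (Suc n) A) (SIGMA m:{..n}. C0 m)"
proof (rule inj_onI)
  fix p p' assume "p \<in> (SIGMA m:{..n}. C0 m)" "p' \<in> (SIGMA m:{..n}. C0 m)"
    "(\<lambda>(m, A). insert (Suc n) A) p = (\<lambda>(m, A). insert (Suc n) A) p'"
  then obtain m A m' A' where pp: "p = (m, A)" "p' = (m', A')" and
   a: "m \<in> {..n}" "A \<in> C0 m" "m' \<in> {..n}" "A' \<in> C0 m'" "insert (Suc n) A = insert (Suc n) A'"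
    by (cases p, cases p') auto
  have "Suc n \<notin> A" using C0_lt[OF a(2)] a(1) by force
  moreover have "Suc n \<notin> A'" using C0_lt[OF a(4)] a(3) by force
  ultimately have "A = A'" using a(5) by (metis Diff_insert_absorb)
  moreover have "m = Max (insert 0 A)" "m' = Max (insert 0 A')" using a(2,4) unfolding C0_def by auto
  ultimately show "p = p'" using pp by simp
qed

lemma prev_ren_insert:
  assumes "A \<in> C0 m" "m \<le> n"
  shows "prev_ren (insert (Suc n) A) (Suc n) = m"
    and "a \<in> A \<Longrightarrow> prev_ren (insert (Suc n) A) a = prev_ren A a"
proof -
  have "{x \<in> insert (Suc n) A. x < Suc n} = A" using C0_lt[OF assms(1)] assms(2) by force
  then show "prev_ren (insert (Suc n) A) (Suc n) = m"
    using assms(1) unfolding prev_ren_def C0_def by simp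
next
  assume "a \<in> A"
  then have "{x \<in> insert (Suc n) A. x < a} = {x \<in> A. x < a}" using C0_lt[OF assms(1)] assms(2) by force
  then show "prev_ren (insert (Suc n) A) a = prev_ren A a" unfolding prev_ren_def by simp
qed

lemma weight_insert:
  assumes "A \<in> C0 m" "m \<le> n"
  shows "ren_weight K (insert (Suc n) A) = K (Suc n - m) * ren_weight K A"
proof -
  have fin: "finite A" using C0_sub[OF assms(1)] finite_subset by blast
  have nin: "Suc n \<notin> A" using C0_lt[OF assms(1)] assms(2) by force
  show ?thesis
    unfolding ren_weight_def
    using prev_ren_insert[OF assms] fin nin by (simp add: prod.insert)
qed

lemma H_Suc: "H K v (Suc n) = (\<Sum>m\<le>n. H K v m * K (Suc n - m)) * exp (v (Suc n))"
proof -
  have "H K v (Suc n) = (\<Sum>p\<in>(SIGMA m:{..n}. C0 m).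
      ren_weight K (insert (Suc n) (snd p)) * exp (\<Sum>j\<in>insert (Suc n) (snd p). v j))"
    unfolding H_def C0_decomp by (subst sum.reindex[OF C0_inj]) (simp add: case_prod_beta)
  also have "\<dots> = (\<Sum>m\<le>n. \<Sum>A\<in>C0 m. ren_weight K (insert (Suc n) A) * exp (\<Sum>j\<in>insert (Suc n) A. v j))"
    by (subst sum.Sigma) (auto simp: C0_finite split_def)
  also have "\<dots> = (\<Sum>m\<le>n. \<Sum>A\<in>C0 m. (ren_weight K A * exp (\<Sum>j\<in>A. v j)) * (K (Suc n - m) * exp (v (Suc n))))"
  proof (intro sum.cong refl)
    fix m A assume m: "m \<in> {..n}" and A: "A \<in> C0 m"
    have fin: "finite A" using C0_sub[OF A] finite_subset by blast
    have nin: "Suc n \<notin> A" using C0_lt[OF A] m by force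
    show "ren_weight K (insert (Suc n) A) * exp (\<Sum>j\<in>insert (Suc n) A. v j) =
        (ren_weight K A * exp (\<Sum>j\<in>A. v j)) * (K (Suc n - m) * exp (v (Suc n)))"
      using weight_insert[OF A] m fin nin by (simp add: exp_add)
  qed
  also have "\<dots> = (\<Sum>m\<le>n. H K v m * K (Suc n - m)) * exp (v (Suc n))"
    unfolding H_def by (simp add: sum_distrib_left sum_distrib_right mult_ac)
  finally show ?thesis .
qed

lemma H_zr: "H K v n = zr K v n"
proof (induction n rule: less_induct)
  case (less n)
  show ?case
  proof (cases n)
    case 0 then show ?thesis by (simp add: H_def C0_0 ren_weight_def)
  next
    case (Suc n')
    then show ?thesis using less by (simp add: H_Suc)
  qed
qed

lemma Zpin_zr: "N \<ge> 1 \<Longrightarrow> Zpin K N \<beta> h \<omega> = zr K (\<lambda>n. \<beta> * \<omega> n + h) N"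
  unfolding Zpin_def H_zr[symmetric] H_def C0_pos by simp

lemma Zhom_zr: "N \<ge> 1 \<Longrightarrow> Zhom K N h = zr K (\<lambda>n. h) N"
  unfolding Zhom_def H_zr[symmetric] H_def C0_pos by (simp add: mult.commute)



lemma zr_nonneg:
  assumes "\<And>j. j \<ge> 1 \<Longrightarrow> K j > 0"
  shows "zr K v n \<ge> 0"
  by (rule less_imp_le[OF zr_pos[OF assms]])

lemma zr_superadd:
  assumes Kpos: "\<And>j. j \<ge> 1 \<Longrightarrow> K j > 0"
  shows "zr K v c * zr K (\<lambda>i. v (i + c)) n \<le> zr K v (c + n)"
proof (induction n rule: less_induct)
  case (less n)
  show ?case
  proof (cases n)
    case 0 then show ?thesis by simp
  next
    case (Suc n')
    let ?E = "exp (v (Suc (c + n')))"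
    have "zr K v c * zr K (\<lambda>i. v (i + c)) n =
        (\<Sum>j\<le>n'. zr K v c * zr K (\<lambda>i. v (i + c)) j * K (Suc n' - j)) * ?E"
      using Suc by (simp add: sum_distrib_left sum_distrib_right mult.assoc add.commute[of n' c])
    also have "\<dots> \<le> (\<Sum>j\<le>n'. zr K v (c + j) * K (Suc (c + n') - (c + j))) * ?E"
    proof (intro mult_right_mono sum_mono)
      fix j assume j: "j \<in> {..n'}"
      have "K (Suc n' - j) \<ge> 0" using Kpos[of "Suc n' - j"] j by fastforce
      moreover have "Suc (c + n') - (c + j) = Suc n' - j" using j by auto
      moreover have "zr K v c * zr K (\<lambda>i. v (i + c)) j \<le> zr K v (c + j)"
        using less.IH[of j] Suc j by simp
      ultimately show "zr K v c * zr K (\<lambda>i. v (i + c)) j * K (Suc n' - j) \<le> zr K v (c + j) * K (Suc (c + n') - (c + j))"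
        by (metis mult_right_mono)
    qed simp
    also have "(\<Sum>j\<le>n'. zr K v (c + j) * K (Suc (c + n') - (c + j))) * ?E =
        (\<Sum>m\<in>(\<lambda>j. c + j) ` {..n'}. zr K v m * K (Suc (c + n') - m)) * ?E"
      by (subst sum.reindex) (auto simp: inj_on_def)
    also have "\<dots> \<le> (\<Sum>m\<le>c + n'. zr K v m * K (Suc (c + n') - m)) * ?E"
    proof (intro mult_right_mono sum_mono2)
      fix b assume b: "b \<in> {..c + n'} - (+) c ` {..n'}"
      have "0 \<le> zr K v b" by (rule zr_nonneg) (rule Kpos)
      moreover have "K (Suc (c + n') - b) > 0" by (rule Kpos) (use b in auto)
      ultimately show "0 \<le> zr K v b * K (Suc (c + n') - b)" by simp
    qed auto
    also have "\<dots> = zr K v (c + n)" using Suc by simp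
    finally show ?thesis .
  qed
qed

definition Ycr :: "(nat \<Rightarrow> real) \<Rightarrow> (nat \<Rightarrow> real) \<Rightarrow> nat \<Rightarrow> nat \<Rightarrow> real" where
  "Ycr K v c n = (\<Sum>m\<le>c. zr K v m * K (n - m)) * exp (v n)"

lemma zr_cross:
  assumes "c < b"
  shows "zr K v b = (\<Sum>n\<in>{c<..b}. Ycr K v c n * zr K (\<lambda>i. v (i + n)) (b - n))"
  using assms
proof (induction b rule: less_induct)
  case (less b)
  then obtain b' where b: "b = Suc b'" and cb: "c \<le> b'" by (cases b) auto
  let ?E = "exp (v (Suc b'))"
  have split: "{..b'} = {..c} \<union> {c<..b'}" using cb by auto
  have "zr K v b = (\<Sum>j\<le>b'. zr K v j * K (Suc b' - j)) * ?E" using b by simp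
  also have "\<dots> = Ycr K v c (Suc b') + (\<Sum>j\<in>{c<..b'}. zr K v j * K (Suc b' - j) * ?E)"
    unfolding split Ycr_def by (subst sum.union_disjoint) (auto simp: sum_distrib_right distrib_right)
  also have "(\<Sum>j\<in>{c<..b'}. zr K v j * K (Suc b' - j) * ?E) =
      (\<Sum>j\<in>{c<..b'}. \<Sum>n\<in>{n\<in>{c<..b'}. n \<le> j}. Ycr K v c n * zr K (\<lambda>i. v (i + n)) (j - n) * K (Suc b' - j) * ?E)"
  proof (intro sum.cong refl)
    fix j assume j: "j \<in> {c<..b'}"
    have "{n\<in>{c<..b'}. n \<le> j} = {c<..j}" using j by auto
    then show "zr K v j * K (Suc b' - j) * ?E = (\<Sum>n\<in>{n\<in>{c<..b'}. n \<le> j}. Ycr K v c n * zr K (\<lambda>i. v (i + n)) (j - n) * K (Suc b' - j) * ?E)"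
      using less.IH[of j] j b by (simp add: sum_distrib_right)
  qed
  also have "\<dots> = (\<Sum>n\<in>{c<..b'}. \<Sum>j\<in>{j\<in>{c<..b'}. n \<le> j}. Ycr K v c n * zr K (\<lambda>i. v (i + n)) (j - n) * K (Suc b' - j) * ?E)"
    by (rule sum.swap_restrict) auto
  also have "\<dots> = (\<Sum>n\<in>{c<..b'}. Ycr K v c n * zr K (\<lambda>i. v (i + n)) (b - n))"
  proof (intro sum.cong refl)
    fix n assume n: "n \<in> {c<..b'}"
    have set: "{j\<in>{c<..b'}. n \<le> j} = {0 + n..(b' - n) + n}" using n by auto
    let ?S = "{j\<in>{c<..b'}. n \<le> j}"
    have eq: "(\<Sum>j\<in>?S. zr K (\<lambda>i. v (i + n)) (j - n) * K (Suc b' - j)) =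
        (\<Sum>m\<le>b' - n. zr K (\<lambda>i. v (i + n)) m * K (Suc (b' - n) - m))"
      unfolding set sum.shift_bounds_cl_nat_ivl atLeast0AtMost[symmetric]
      by (intro sum.cong refl) (use n in \<open>auto simp: add.commute\<close>)
    have bn: "b - n = Suc (b' - n)" using n b by auto
    have bn2: "Suc (b' - n) + n = Suc b'" using n by auto
    have "(\<Sum>j\<in>?S. Ycr K v c n * zr K (\<lambda>i. v (i + n)) (j - n) * K (Suc b' - j) * ?E) =
        Ycr K v c n * ((\<Sum>j\<in>?S. zr K (\<lambda>i. v (i + n)) (j - n) * K (Suc b' - j)) * ?E)"
      by (simp add: sum_distrib_left sum_distrib_right mult.assoc)
    also have "\<dots> = Ycr K v c n * ((\<Sum>m\<le>b' - n. zr K (\<lambda>i. v (i + n)) m * K (Suc (b' - n) - m)) * ?E)"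
      by (simp only: eq)
    also have "\<dots> = Ycr K v c n * zr K (\<lambda>i. v (i + n)) (b - n)"
      unfolding bn zr.simps(2) bn2 ..
    finally show "(\<Sum>j\<in>?S. Ycr K v c n * zr K (\<lambda>i. v (i + n)) (j - n) * K (Suc b' - j) * ?E) =
        Ycr K v c n * zr K (\<lambda>i. v (i + n)) (b - n)" .
  qed
  finally have "zr K v b = Ycr K v c (Suc b') + (\<Sum>n\<in>{c<..b'}. Ycr K v c n * zr K (\<lambda>i. v (i + n)) (b - n))" .
  moreover have "{c<..b} = insert (Suc b') {c<..b'}" using b cb by auto
  ultimately show ?case using b by simp
qed



definition swset :: "(nat \<Rightarrow> real) \<Rightarrow> nat \<Rightarrow> nat set" where
  "swset v b = {i \<in> {1..<b}. v i \<noteq> v (Suc i)}"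

definition sw :: "(nat \<Rightarrow> real) \<Rightarrow> nat \<Rightarrow> nat" where
  "sw v b = card (swset v b)"

definition lastsw :: "(nat \<Rightarrow> real) \<Rightarrow> nat \<Rightarrow> nat" where
  "lastsw v b = (if swset v b = {} then 0 else Max (swset v b))"

lemma swset_finite: "finite (swset v b)" unfolding swset_def by auto

lemma sw_mono: "m \<le> c \<Longrightarrow> sw v m \<le> sw v c"
  unfolding sw_def by (rule card_mono[OF swset_finite]) (auto simp: swset_def)

lemma lastsw_lt: "b \<ge> 1 \<Longrightarrow> lastsw v b < b"
proof -
  assume "b \<ge> 1"
  show ?thesis
  proof (cases "swset v b = {}")
    case True then show ?thesis using \<open>b \<ge> 1\<close> by (simp add: lastsw_def)
  next
    case False
    then have "Max (swset v b) \<in> swset v b" using swset_finite Max_in by blast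
    then have "Max (swset v b) < b" unfolding swset_def by (metis (no_types, lifting) atLeastLessThan_iff mem_Collect_eq)
    then show ?thesis using False by (simp add: lastsw_def)
  qed
qed

lemma lastsw_const:
  assumes "i \<in> {lastsw v b<..b}"
  shows "v i = v b"
proof -
  let ?c = "lastsw v b"
  have "\<forall>k. k < b - ?c \<longrightarrow> v (b - k) = v b"
  proof (intro allI)
    fix k show "k < b - ?c \<longrightarrow> v (b - k) = v b"
    proof (induction k)
      case 0 then show ?case by simp
    next
      case (Suc k)
      show ?case
      proof
        assume k: "Suc k < b - ?c"
        let ?i = "b - Suc k"
        have i1: "?i > ?c" "?i < b" using k by auto
        have "?i \<notin> swset v b"
        proof
          assume "?i \<in> swset v b"
          then have "?i \<le> Max (swset v b)" "swset v b \<noteq> {}" using swset_finite by auto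
          then show False using i1 unfolding lastsw_def by auto
        qed
        moreover have "?i \<in> {1..<b}" using i1 by auto
        ultimately have "v ?i = v (Suc ?i)" unfolding swset_def by auto
        moreover have "Suc ?i = b - k" using k by auto
        ultimately show "v ?i = v b" using Suc k by auto
      qed
    qed
  qed
  moreover have "b - (b - i) = i" "b - i < b - ?c" using assms by auto
  ultimately show ?thesis by metis
qed

lemma lastsw_sw:
  assumes "swset v b \<noteq> {}"
  shows "lastsw v b \<ge> 1" "sw v b = Suc (sw v (lastsw v b))"
proof -
  let ?c = "lastsw v b"
  have cin: "?c \<in> swset v b" using assms swset_finite Max_in unfolding lastsw_def by auto
  then show "?c \<ge> 1" unfolding swset_def by auto
  have le: "\<And>i. i \<in> swset v b \<Longrightarrow> i \<le> ?c" using assms swset_finite unfolding lastsw_def by auto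
  have "swset v b = insert ?c (swset v ?c)"
  proof (intro set_eqI iffI)
    fix i assume i: "i \<in> swset v b"
    show "i \<in> insert ?c (swset v ?c)"
    proof (cases "i = ?c")
      case False then have "i < ?c" using le[OF i] by auto
      then show ?thesis using i unfolding swset_def by auto
    qed simp
  next
    fix i assume "i \<in> insert ?c (swset v ?c)"
    then show "i \<in> swset v b" using cin unfolding swset_def by auto
  qed
  moreover have "?c \<notin> swset v ?c" unfolding swset_def by auto
  ultimately show "sw v b = Suc (sw v ?c)" unfolding sw_def using swset_finite by simp
qed

lemma sum_const_block:
  assumes "\<And>i. i \<in> {c<..b} \<Longrightarrow> v i = v b" "c \<le> b"
  shows "(\<Sum>i\<in>{c<..b}. f (v i)) = real (b - c) * f (v b)"
proof -
  have "(\<Sum>i\<in>{c<..b}. f (v i)) = (\<Sum>i\<in>{c<..b}. f (v b))"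
  proof (rule sum.cong)
    fix i assume "i \<in> {c<..b}"
    then have "v i = v b" by (rule assms(1))
    then show "f (v i) = f (v b)" by (rule arg_cong)
  qed simp
  then show ?thesis by simp
qed

lemma sum_split_block:
  fixes b c :: nat
  assumes "c \<le> b"
  shows "(\<Sum>i\<in>{1..b}. g i) = (\<Sum>i\<in>{1..c}. g i) + (\<Sum>i\<in>{c<..b}. (g i::real))"
proof -
  have "{1..b} = {1..c} \<union> {c<..b}" using assms by auto
  then show ?thesis by (simp add: sum.union_disjoint ivl_disj_int)
qed

lemma zr_upper:
  fixes K v :: "nat \<Rightarrow> real" and \<Phi> :: "real \<Rightarrow> real" and B :: real and N :: nat
  assumes Kpos: "\<And>j. j \<ge> 1 \<Longrightarrow> K j > 0"
    and Kle: "\<And>j. j \<ge> 1 \<Longrightarrow> K j \<le> 1"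
    and Pnn: "\<And>i. 1 \<le> i \<Longrightarrow> i \<le> N \<Longrightarrow> \<Phi> (v i) \<ge> 0"
    and hom: "\<And>i l. 1 \<le> i \<Longrightarrow> i \<le> N \<Longrightarrow> zr K (\<lambda>_. v i) l \<le> exp (\<Phi> (v i) * real l)"
    and bd: "\<And>i. 1 \<le> i \<Longrightarrow> i \<le> N \<Longrightarrow> \<bar>v i\<bar> \<le> B"
    and B0: "B \<ge> 0"
  shows "b \<le> N \<Longrightarrow> zr K v b \<le> exp ((\<Sum>i\<in>{1..b}. \<Phi> (v i)) + (2 * ln (real N + 1) + B) * (1 + real (sw v b)))"
proof (induction b rule: less_induct)
  case (less b)
  define D where "D = 2 * ln (real N + 1) + B"
  have D0: "D \<ge> 0" unfolding D_def using B0 by simp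
  define S where "S = (\<lambda>b. \<Sum>i\<in>{1..b}. \<Phi> (v i))"
  have Smono: "S m \<le> S c" if "m \<le> c" "c \<le> N" for m c
    unfolding S_def using that by (intro sum_mono2) (auto intro: Pnn)
  show ?case
  proof (cases "b = 0")
    case True then show ?thesis using D0 by (simp add: D_def)
  next
    case False
    then have b1: "b \<ge> 1" by simp
    let ?c = "lastsw v b"
    have cb: "?c < b" using lastsw_lt[OF b1] .
    have const: "\<And>i. i \<in> {?c<..b} \<Longrightarrow> v i = v b" using lastsw_const by blast
    have vb: "1 \<le> b" "b \<le> N" using b1 less.prems by auto
    have Ssplit: "S b = S ?c + real (b - ?c) * \<Phi> (v b)"
      unfolding S_def using sum_split_block[of ?c b "\<lambda>i. \<Phi> (v i)"] sum_const_block[of ?c b v \<Phi>, OF const] cb by simp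
    have zp: "\<And>u n. zr K u n > 0" by (rule zr_pos) (rule Kpos)
    have shift: "zr K (\<lambda>i. v (i + n)) (b - n) = zr K (\<lambda>_. v b) (b - n)" if "n \<in> {?c<..b}" for n
      by (rule zr_cong, rule const) (use that in auto)
    show ?thesis
    proof (cases "swset v b = {}")
      case True
      then have c0: "?c = 0" by (simp add: lastsw_def)
      have "zr K v b = zr K (\<lambda>_. v b) b" by (rule zr_cong, rule const) (use c0 in auto)
      also have "\<dots> \<le> exp (\<Phi> (v b) * real b)" using hom vb by blast
      also have "\<Phi> (v b) * real b = S b" using Ssplit c0 by (simp add: S_def)
      also have "exp (S b) \<le> exp (S b + D * (1 + real (sw v b)))" using D0 by simp
      finally show ?thesis by (simp add: S_def D_def)
    next
      case False
      have c1: "?c \<ge> 1" and swb: "sw v b = Suc (sw v ?c)" using lastsw_sw[OF False] by auto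
      define G where "G = exp (S ?c + D * (1 + real (sw v ?c)))"
      have zrm: "zr K v m \<le> G" if "m \<le> ?c" for m
      proof -
        have "zr K v m \<le> exp (S m + D * (1 + real (sw v m)))"
          using less.IH[of m] that cb less.prems by (simp add: S_def D_def)
        also have "\<dots> \<le> G" unfolding G_def
          using Smono[of m ?c] that cb vb sw_mono[OF that, of v] D0
          by (intro exp_mono add_mono mult_left_mono) auto
        finally show ?thesis .
      qed
      have Y: "Ycr K v ?c n \<le> (real ?c + 1) * G * exp B" if n: "n \<in> {?c<..b}" for n
      proof -
        have s1: "(\<Sum>m\<le>?c. zr K v m * K (n - m)) \<le> (\<Sum>m\<le>?c. G)"
        proof (rule sum_mono)
          fix m assume m: "m \<in> {..?c}"
          have nm: "n - m \<ge> 1" using m n by auto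
          have "K (n - m) \<le> 1" "K (n - m) \<ge> 0" using Kle[OF nm] Kpos[OF nm] by auto
          moreover have "zr K v m \<ge> 0" by (rule zr_nonneg) (rule Kpos)
          ultimately have "zr K v m * K (n - m) \<le> zr K v m" by (simp add: mult_left_le)
          moreover have "zr K v m \<le> G" using m by (intro zrm) simp
          ultimately show "zr K v m * K (n - m) \<le> G" by linarith
        qed
        have n1: "1 \<le> n" "n \<le> N" using n c1 vb by auto
        have e1: "exp (v n) \<le> exp B" using bd[OF n1] by simp
        have G0: "G \<ge> 0" unfolding G_def by simp
        have s2: "(\<Sum>m\<le>?c. G) = (real ?c + 1) * G" by simp
        have s3: "(\<Sum>m\<le>?c. zr K v m * K (n - m)) \<le> (real ?c + 1) * G" using s1 s2 by linarith
        have "(\<Sum>m\<le>?c. zr K v m * K (n - m)) * exp (v n) \<le> ((real ?c + 1) * G) * exp B"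
          by (rule mult_mono[OF s3 e1]) (use G0 in auto)
        then show ?thesis unfolding Ycr_def .
      qed
      have T: "Ycr K v ?c n * zr K (\<lambda>i. v (i + n)) (b - n) \<le>
               (real ?c + 1) * G * exp B * exp (\<Phi> (v b) * real (b - ?c))" if n: "n \<in> {?c<..b}" for n
      proof -
        have "zr K (\<lambda>i. v (i + n)) (b - n) \<le> exp (\<Phi> (v b) * real (b - n))"
          using shift[OF n] hom[of b "b - n"] vb by simp
        also have "\<dots> \<le> exp (\<Phi> (v b) * real (b - ?c))"
          using Pnn[of b] vb n by (auto intro!: mult_left_mono)
        finally have z: "zr K (\<lambda>i. v (i + n)) (b - n) \<le> exp (\<Phi> (v b) * real (b - ?c))" .
        have "Ycr K v ?c n \<ge> 0" unfolding Ycr_def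
        proof (rule mult_nonneg_nonneg, rule sum_nonneg)
          fix m assume m: "m \<in> {..?c}"
          have "zr K v m \<ge> 0" by (rule zr_nonneg) (rule Kpos)
          moreover have "K (n - m) > 0" by (rule Kpos) (use m n in auto)
          ultimately show "0 \<le> zr K v m * K (n - m)" by simp
        qed simp
        moreover have "zr K (\<lambda>i. v (i + n)) (b - n) \<ge> 0" by (rule zr_nonneg) (rule Kpos)
        moreover have "(real ?c + 1) * G * exp B \<ge> 0" unfolding G_def by simp
        ultimately show ?thesis using Y[OF n] z by (metis mult_mono)
      qed
      have "zr K v b = (\<Sum>n\<in>{?c<..b}. Ycr K v ?c n * zr K (\<lambda>i. v (i + n)) (b - n))"
        using zr_cross[OF cb] .
      also have "\<dots> \<le> (\<Sum>n\<in>{?c<..b}. (real ?c + 1) * G * exp B * exp (\<Phi> (v b) * real (b - ?c)))"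
        by (rule sum_mono) (rule T)
      also have "\<dots> = (real (b - ?c) * (real ?c + 1)) * exp B * G * exp (\<Phi> (v b) * real (b - ?c))"
        using cb by (simp add: of_nat_diff mult_ac)
      also have "\<dots> \<le> (real N + 1) ^ 2 * exp B * G * exp (\<Phi> (v b) * real (b - ?c))"
      proof (intro mult_right_mono)
        have "real (b - ?c) \<le> real N + 1" "real ?c + 1 \<le> real N + 1" using cb vb by auto
        then show "real (b - ?c) * (real ?c + 1) \<le> (real N + 1) ^ 2"
          unfolding power2_eq_square by (intro mult_mono) auto
      qed (auto simp: G_def)
      also have "(real N + 1) ^ 2 = exp (2 * ln (real N + 1))"
      proof -
        have p: "(0::real) < real N + 1" by simp
        have "ln ((real N + 1) ^ 2) = real 2 * ln (real N + 1)" by (rule ln_realpow)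
        then have "exp (2 * ln (real N + 1)) = exp (ln ((real N + 1) ^ 2))" by simp
        also have "\<dots> = (real N + 1) ^ 2" using p by (intro exp_ln) simp
        finally show ?thesis by simp
      qed
      also have "exp (2 * ln (real N + 1)) * exp B * G * exp (\<Phi> (v b) * real (b - ?c)) =
          exp (S b + D * (1 + real (sw v b)))"
        unfolding G_def Ssplit swb D_def by (simp add: exp_add[symmetric] algebra_simps)
      finally show ?thesis by (simp add: S_def D_def)
    qed
  qed
qed

lemma zr_lower:
  fixes K v :: "nat \<Rightarrow> real" and \<Phi> :: "real \<Rightarrow> real" and C \<epsilon> :: real and N :: nat
  assumes Kpos: "\<And>j. j \<ge> 1 \<Longrightarrow> K j > 0"
    and C0: "C \<ge> 0"
    and hom: "\<And>i l. 1 \<le> i \<Longrightarrow> i \<le> N \<Longrightarrow> l \<ge> 1 \<Longrightarrow> ln (zr K (\<lambda>_. v i) l) \<ge> (\<Phi> (v i) - \<epsilon>) * real l - C"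
  shows "b \<le> N \<Longrightarrow> ln (zr K v b) \<ge> (\<Sum>i\<in>{1..b}. \<Phi> (v i) - \<epsilon>) - C * (1 + real (sw v b))"
proof (induction b rule: less_induct)
  case (less b)
  define S where "S = (\<lambda>b. \<Sum>i\<in>{1..b}. \<Phi> (v i) - \<epsilon>)"
  show ?case
  proof (cases "b = 0")
    case True then show ?thesis using C0 by simp
  next
    case False
    then have b1: "b \<ge> 1" by simp
    let ?c = "lastsw v b"
    have cb: "?c < b" using lastsw_lt[OF b1] .
    have const: "\<And>i. i \<in> {?c<..b} \<Longrightarrow> v i = v b" using lastsw_const by blast
    have vb: "1 \<le> b" "b \<le> N" using b1 less.prems by auto
    have zp: "\<And>u n. zr K u n > 0" by (rule zr_pos) (rule Kpos)
    have Ssplit: "S b = S ?c + real (b - ?c) * (\<Phi> (v b) - \<epsilon>)"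
      unfolding S_def using sum_split_block[of ?c b "\<lambda>i. \<Phi> (v i) - \<epsilon>"]
        sum_const_block[of ?c b v "\<lambda>x. \<Phi> x - \<epsilon>", OF const] cb by simp
    show ?thesis
    proof (cases "swset v b = {}")
      case True
      then have c0: "?c = 0" by (simp add: lastsw_def)
      have "zr K v b = zr K (\<lambda>_. v b) b" by (rule zr_cong, rule const) (use c0 in auto)
      then have "ln (zr K v b) \<ge> (\<Phi> (v b) - \<epsilon>) * real b - C" using hom[of b b] vb by simp
      moreover have "(\<Phi> (v b) - \<epsilon>) * real b = S b" using Ssplit c0 by (simp add: S_def)
      moreover have "C * 1 \<le> C * (1 + real (sw v b))" by (rule mult_left_mono) (use C0 in auto)
      ultimately show ?thesis unfolding S_def by linarith
    next
      case False
      have c1: "?c \<ge> 1" and swb: "sw v b = Suc (sw v ?c)" using lastsw_sw[OF False] by auto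
      have IH: "ln (zr K v ?c) \<ge> S ?c - C * (1 + real (sw v ?c))"
        using less.IH[of ?c] cb less.prems by (simp add: S_def)
      have eqc: "zr K (\<lambda>i. v (i + ?c)) (b - ?c) = zr K (\<lambda>_. v b) (b - ?c)"
        by (rule zr_cong, rule const) (use cb in auto)
      have H: "ln (zr K (\<lambda>_. v b) (b - ?c)) \<ge> (\<Phi> (v b) - \<epsilon>) * real (b - ?c) - C"
        using hom[of b "b - ?c"] vb cb by simp
      have "zr K v ?c * zr K (\<lambda>_. v b) (b - ?c) \<le> zr K v b"
        using zr_superadd[of K v ?c "b - ?c", OF Kpos] eqc cb by simp
      then have "ln (zr K v ?c * zr K (\<lambda>_. v b) (b - ?c)) \<le> ln (zr K v b)"
        using zp by (intro ln_mono mult_pos_pos) auto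
      moreover have "ln (zr K v ?c * zr K (\<lambda>_. v b) (b - ?c)) = ln (zr K v ?c) + ln (zr K (\<lambda>_. v b) (b - ?c))"
        using zp by (intro ln_mult_pos) auto
      ultimately have "ln (zr K v b) \<ge> S ?c - C * (1 + real (sw v ?c)) + ((\<Phi> (v b) - \<epsilon>) * real (b - ?c) - C)"
        using IH H by linarith
      then show ?thesis using Ssplit swb by (simp add: S_def algebra_simps)
    qed
  qed
qed



lemma superadd_iter:
  fixes a :: "nat \<Rightarrow> real"
  assumes sa: "\<And>m n. a m + a n \<le> a (m + n)"
  shows "real q * a m + a r \<le> a (q * m + r)"
proof (induction q)
  case 0 then show ?case by simp
next
  case (Suc q)
  have "a m + a (q * m + r) \<le> a (m + (q * m + r))" by (rule sa)
  then show ?case using Suc by (simp add: algebra_simps)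
qed

lemma fekete:
  fixes a :: "nat \<Rightarrow> real"
  assumes sa: "\<And>m n. a m + a n \<le> a (m + n)"
    and ub: "\<And>n. a n \<le> M * real n"
  shows "(\<lambda>n. a n / real n) \<longlonglongrightarrow> (SUP n\<in>{1..}. a n / real n)"
    and "\<And>n. n \<ge> 1 \<Longrightarrow> a n / real n \<le> (SUP n\<in>{1..}. a n / real n)"
proof -
  let ?s = "SUP n\<in>{1..}. a n / real n"
  have bdd: "bdd_above ((\<lambda>n. a n / real n) ` {1..})"
  proof (rule bdd_aboveI2)
    fix n :: nat assume "n \<in> {1..}"
    then show "a n / real n \<le> M" using ub[of n] by (simp add: divide_le_eq mult.commute)
  qed
  show up: "\<And>n. n \<ge> 1 \<Longrightarrow> a n / real n \<le> ?s"
    by (rule cSUP_upper[OF _ bdd]) simp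
  show "(\<lambda>n. a n / real n) \<longlonglongrightarrow> ?s"
  proof (rule order_tendstoI)
    fix y assume "?s < y"
    then show "eventually (\<lambda>n. a n / real n < y) sequentially"
      using up by (intro eventually_sequentiallyI[of 1]) (auto intro: le_less_trans)
  next
    fix y assume ys: "y < ?s"
    define y' where "y' = (y + ?s) / 2"
    have "y' < ?s" "y < y'" using ys by (auto simp: y'_def)
    then obtain m where m: "m \<in> {1..}" "y' < a m / real m"
      using less_cSUP_iff[OF _ bdd] by auto
    define t where "t = a m / real m"
    define \<mu> where "\<mu> = Min (a ` {..<m})"
    have \<mu>: "\<And>r. r < m \<Longrightarrow> \<mu> \<le> a r" unfolding \<mu>_def by (intro Min_le) auto
    define R where "R = (real m * \<bar>t\<bar> + \<bar>\<mu>\<bar>) / (y' - y)"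
    have "eventually (\<lambda>n. real n > R \<and> n \<ge> 1) sequentially"
      using eventually_conj[OF eventually_gt_at_top[of "nat \<lceil>R\<rceil>"] eventually_ge_at_top[of 1]]
      by eventually_elim (use ceiling_le_iff in \<open>auto simp: not_le\<close>, linarith)
    then show "eventually (\<lambda>n. y < a n / real n) sequentially"
    proof eventually_elim
      case (elim n)
      then have n1: "real n > 0" and nR: "real n > R" by auto
      define q where "q = n div m"
      define r where "r = n mod m"
      have m1: "m \<ge> 1" using m by simp
      have nqr: "n = q * m + r" unfolding q_def r_def by simp
      have rm: "r < m" unfolding r_def using m1 by simp
      have "a n \<ge> real q * a m + a r" using superadd_iter[OF sa, of q m r] nqr by simp
      also have "real q * a m = real (q * m) * t" using m1 unfolding t_def by simp
      finally have an: "a n \<ge> real (q * m) * t + \<mu>" using \<mu>[OF rm] by linarith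
      have qm: "real (q * m) \<le> real n" "real n - real m \<le> real (q * m)" using nqr rm by linarith+
      have "real (q * m) * t \<ge> real n * t - real m * \<bar>t\<bar>"
      proof (cases "t \<ge> 0")
        case True
        then have "real (q * m) * t \<ge> (real n - real m) * t" using qm by (intro mult_right_mono) auto
        then show ?thesis using True by (simp add: algebra_simps)
      next
        case False
        then have "real (q * m) * t \<ge> real n * t" using qm by (intro mult_right_mono_neg) auto
        moreover have "real m * \<bar>t\<bar> \<ge> 0" by simp
        ultimately show ?thesis by linarith
      qed
      then have "a n \<ge> real n * t - (real m * \<bar>t\<bar> + \<bar>\<mu>\<bar>)" using an by linarith
      moreover have "real m * \<bar>t\<bar> + \<bar>\<mu>\<bar> < real n * (y' - y)"
        using nR \<open>y < y'\<close> unfolding R_def by (simp add: divide_less_eq mult.commute)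
      ultimately have "a n > real n * y + real n * (t - y')" by (simp add: algebra_simps)
      moreover have "real n * (t - y') \<ge> 0" using m(2) n1 unfolding t_def by simp
      ultimately have "a n > real n * y" by linarith
      then show ?case using n1 by (simp add: less_divide_eq mult.commute)
    qed
  qed
qed



lemma ln_le_of: "(0::real) < z \<Longrightarrow> z \<le> exp y \<Longrightarrow> ln z \<le> y"
  using ln_mono[of z "exp y"] by simp

locale Kren =
  fixes K :: "nat \<Rightarrow> real" and c0 p :: real
  assumes Kpos: "\<And>j. j \<ge> 1 \<Longrightarrow> K j > 0"
    and Ksum: "(\<lambda>n. K (Suc n)) sums 1"
    and Klow: "\<And>n. n \<ge> 1 \<Longrightarrow> ln (K n) \<ge> c0 - p * ln (real n)"
begin

lemma Kpartial: "(\<Sum>m\<le>n. K (Suc n - m)) \<le> 1"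
proof -
  have "(\<Sum>m\<le>n. K (Suc n - m)) = (\<Sum>m\<in>{0..n}. K (Suc n - m))" by (simp add: atLeast0AtMost)
  also have "\<dots> = (\<Sum>i\<in>{0..n}. K (Suc i))"
    by (subst sum.atLeastAtMost_rev) (intro sum.cong refl, auto simp: Suc_diff_le)
  also have "\<dots> \<le> suminf (\<lambda>n. K (Suc n))"
    using Ksum Kpos by (intro sum_le_suminf) (auto simp: sums_summable less_imp_le)
  also have "\<dots> = 1" using Ksum sums_unique by metis
  finally show ?thesis .
qed

lemma K_le1: assumes "j \<ge> 1" shows "K j \<le> 1"
proof -
  obtain n where j: "j = Suc n" using assms by (cases j) auto
  have "K (Suc n - 0) \<le> (\<Sum>m\<le>n. K (Suc n - m))"
  proof (rule member_le_sum)
    fix m assume "m \<in> {..n} - {0}"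
    then have "Suc n - m \<ge> 1" by auto
    then show "0 \<le> K (Suc n - m)" using Kpos less_imp_le by blast
  qed auto
  then have "K j \<le> (\<Sum>m\<le>n. K (Suc n - m))" using j by simp
  then show ?thesis using Kpartial[of n] by linarith
qed

lemma zpos: "zr K u n > 0" by (rule zr_pos) (rule Kpos)

definition a :: "real \<Rightarrow> nat \<Rightarrow> real" where "a x n = ln (zr K (\<lambda>_. x) n)"

lemma zr_hom_ub: "zr K (\<lambda>_. x) n \<le> exp (max x 0 * real n)"
proof (induction n rule: less_induct)
  case (less n)
  show ?case
  proof (cases n)
    case 0 then show ?thesis by simp
  next
    case (Suc n')
    have "(\<Sum>m\<le>n'. zr K (\<lambda>_. x) m * K (Suc n' - m)) \<le> (\<Sum>m\<le>n'. exp (max x 0 * real n') * K (Suc n' - m))"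
    proof (rule sum_mono)
      fix m assume m: "m \<in> {..n'}"
      have "zr K (\<lambda>_. x) m \<le> exp (max x 0 * real m)" using less.IH[of m] Suc m by auto
      also have "\<dots> \<le> exp (max x 0 * real n')" using m by (auto intro!: mult_left_mono)
      finally show "zr K (\<lambda>_. x) m * K (Suc n' - m) \<le> exp (max x 0 * real n') * K (Suc n' - m)"
        using Kpos[of "Suc n' - m"] m by (intro mult_right_mono) fastforce+
    qed
    also have "\<dots> = exp (max x 0 * real n') * (\<Sum>m\<le>n'. K (Suc n' - m))" by (simp add: sum_distrib_left)
    also have "\<dots> \<le> exp (max x 0 * real n')" using Kpartial[of n'] by simp
    finally have "zr K (\<lambda>_. x) n \<le> exp (max x 0 * real n') * exp x"
      using Suc by (simp add: mult_right_mono)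
    also have "\<dots> = exp (max x 0 * real n' + x)" by (simp add: exp_add)
    also have "\<dots> \<le> exp (max x 0 * real n)" using Suc by (auto simp: algebra_simps)
    finally show ?thesis .
  qed
qed

lemma a_superadd: "a x m + a x n \<le> a x (m + n)"
proof -
  have "zr K (\<lambda>_. x) m * zr K (\<lambda>_. x) n \<le> zr K (\<lambda>_. x) (m + n)"
    using zr_superadd[of K "\<lambda>_. x" m n, OF Kpos] by simp
  then have "ln (zr K (\<lambda>_. x) m * zr K (\<lambda>_. x) n) \<le> ln (zr K (\<lambda>_. x) (m + n))"
    using zpos by (intro ln_mono mult_pos_pos) auto
  then show ?thesis unfolding a_def using zpos by (simp add: ln_mult_pos)
qed

lemma a_ub: "a x n \<le> max x 0 * real n"
  unfolding a_def by (rule ln_le_of[OF zpos zr_hom_ub])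

lemma Fhom_lim: "(\<lambda>n. a x n / real n) \<longlonglongrightarrow> Fhom K x"
  and Fhom_ub: "n \<ge> 1 \<Longrightarrow> a x n / real n \<le> Fhom K x"
proof -
  have hfun: "(\<lambda>N. ln (Zhom K N x) / real N) = (\<lambda>n. a x n / real n)"
  proof
    fix N show "ln (Zhom K N x) / real N = a x N / real N"
      by (cases "N = 0") (auto simp: Zhom_zr a_def)
  qed
  have L: "(\<lambda>n. a x n / real n) \<longlonglongrightarrow> (SUP n\<in>{1..}. a x n / real n)"
    by (rule fekete(1)[OF a_superadd a_ub])
  have F: "Fhom K x = (SUP n\<in>{1..}. a x n / real n)"
    unfolding Fhom_def hfun using L by (rule limI)
  show "(\<lambda>n. a x n / real n) \<longlonglongrightarrow> Fhom K x" using L F by simp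
  show "n \<ge> 1 \<Longrightarrow> a x n / real n \<le> Fhom K x"
    unfolding F by (rule fekete(2)[OF a_superadd a_ub])
qed

lemma zr_le_F: "zr K (\<lambda>_. x) n \<le> exp (Fhom K x * real n)"
proof (cases "n = 0")
  case True then show ?thesis by simp
next
  case False
  then have "a x n \<le> Fhom K x * real n" using Fhom_ub[of n x] by (simp add: divide_le_eq)
  then show ?thesis unfolding a_def using zpos[of "\<lambda>_. x" n] by (simp add: ln_ge_iff[symmetric] ln_le_cancel_iff[symmetric] del: ln_le_cancel_iff)
qed

lemma Fhom_nonneg: "Fhom K x \<ge> 0"
proof (rule LIMSEQ_le[OF _ Fhom_lim])
  show "(\<lambda>n. (c0 - p * ln (real n) + x) / real n) \<longlonglongrightarrow> 0" by real_asymp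
  show "\<exists>N. \<forall>n\<ge>N. (c0 - p * ln (real n) + x) / real n \<le> a x n / real n"
  proof (intro exI[of _ 1] allI impI)
    fix n :: nat assume n: "n \<ge> 1"
    have "zr K (\<lambda>_. x) n = (\<Sum>m<n. zr K (\<lambda>_. x) m * K (n - m)) * exp x" using zr_alt[OF n] by simp
    also have "(\<Sum>m<n. zr K (\<lambda>_. x) m * K (n - m)) \<ge> zr K (\<lambda>_. x) 0 * K (n - 0)"
      using n zpos Kpos by (intro member_le_sum) (auto intro!: mult_nonneg_nonneg less_imp_le)
    then have "(\<Sum>m<n. zr K (\<lambda>_. x) m * K (n - m)) * exp x \<ge> K n * exp x" by simp
    finally have "zr K (\<lambda>_. x) n \<ge> K n * exp x" .
    then have "ln (zr K (\<lambda>_. x) n) \<ge> ln (K n * exp x)"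
      using Kpos[OF n] by (intro ln_mono) auto
    also have "ln (K n * exp x) = ln (K n) + x" using Kpos[OF n] by (simp add: ln_mult_pos)
    finally have "a x n \<ge> c0 - p * ln (real n) + x" using Klow[OF n] unfolding a_def by linarith
    then show "(c0 - p * ln (real n) + x) / real n \<le> a x n / real n"
      using n by (intro divide_right_mono) auto
  qed
qed

lemma Fhom_nonpos: assumes "x \<le> 0" shows "Fhom K x \<le> 0"
proof (rule LIMSEQ_le[OF Fhom_lim tendsto_const])
  show "\<exists>N. \<forall>n\<ge>N. a x n / real n \<le> 0"
    using a_ub[of x] assms by (intro exI[of _ 0] allI impI) (simp add: divide_nonpos_nonneg)
qed

lemma Fhom_lower:
  assumes "\<epsilon> > 0"
  shows "\<exists>C\<ge>0. \<forall>l\<ge>1. ln (zr K (\<lambda>_. x) l) \<ge> (Fhom K x - \<epsilon>) * real l - C"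
proof -
  have "eventually (\<lambda>n. a x n / real n > Fhom K x - \<epsilon>) sequentially"
    using Fhom_lim[of x] assms by (intro order_tendstoD(1)) auto
  then obtain L where L: "\<And>n. n \<ge> L \<Longrightarrow> a x n / real n > Fhom K x - \<epsilon>"
    unfolding eventually_sequentially by blast
  define C where "C = (\<Sum>l<L. \<bar>(Fhom K x - \<epsilon>) * real l - a x l\<bar>)"
  have C0: "C \<ge> 0" unfolding C_def by (intro sum_nonneg) auto
  have "ln (zr K (\<lambda>_. x) l) \<ge> (Fhom K x - \<epsilon>) * real l - C" if l: "l \<ge> 1" for l
  proof (cases "l \<ge> L")
    case True
    then have "a x l / real l > Fhom K x - \<epsilon>" by (rule L)
    then have "a x l > (Fhom K x - \<epsilon>) * real l" using l by (simp add: less_divide_eq)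
    then show ?thesis using C0 unfolding a_def by linarith
  next
    case False
    then have "\<bar>(Fhom K x - \<epsilon>) * real l - a x l\<bar> \<le> C"
      unfolding C_def by (intro member_le_sum[where f = "\<lambda>l. \<bar>(Fhom K x - \<epsilon>) * real l - a x l\<bar>"]) auto
    then show ?thesis unfolding a_def by linarith
  qed
  then show ?thesis using C0 by blast
qed

end



definition W :: "real \<Rightarrow> nat \<Rightarrow> nat \<Rightarrow> (nat \<Rightarrow> real) \<Rightarrow> real" where
  "W \<gamma> N n w = (1/2) * (\<Prod>i\<in>{1..n}. Qmat \<gamma> N (w (i - 1)) (w i))"

definition ES :: "real \<Rightarrow> nat \<Rightarrow> nat \<Rightarrow> ((nat \<Rightarrow> real) \<Rightarrow> real) \<Rightarrow> real" where
  "ES \<gamma> N n g = (\<Sum>w\<in>PiE {0..n} (\<lambda>_. {-1, 1}). W \<gamma> N n w * g w)"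

lemma EN_ES: "EN \<gamma> N g = ES \<gamma> N N g"
  unfolding EN_def ES_def W_def by simp

abbreviation PS :: "nat \<Rightarrow> (nat \<Rightarrow> real) set" where "PS n \<equiv> PiE {0..n} (\<lambda>_. {-1, 1::real})"

lemma W_Suc:
  assumes "w \<in> PS n"
  shows "W \<gamma> N (Suc n) (w(Suc n := y)) = W \<gamma> N n w * Qmat \<gamma> N (w n) y"
proof -
  have "(\<Prod>i\<in>{1..Suc n}. Qmat \<gamma> N ((w(Suc n := y)) (i - 1)) ((w(Suc n := y)) i)) =
      (\<Prod>i\<in>{1..n}. Qmat \<gamma> N ((w(Suc n := y)) (i - 1)) ((w(Suc n := y)) i)) * Qmat \<gamma> N (w n) y"
    by (simp add: prod.cl_ivl_Suc)
  also have "(\<Prod>i\<in>{1..n}. Qmat \<gamma> N ((w(Suc n := y)) (i - 1)) ((w(Suc n := y)) i)) =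
      (\<Prod>i\<in>{1..n}. Qmat \<gamma> N (w (i - 1)) (w i))"
    by (intro prod.cong refl) auto
  finally show ?thesis unfolding W_def by simp
qed

lemma ES_Suc:
  "ES \<gamma> N (Suc n) g = (\<Sum>w\<in>PS n. W \<gamma> N n w * (\<Sum>y\<in>{-1, 1}. Qmat \<gamma> N (w n) y * g (w(Suc n := y))))"
proof -
  have eq: "PS (Suc n) = (\<lambda>(y, g). g(Suc n := y)) ` ({-1, 1} \<times> PS n)"
    using PiE_insert_eq[of "Suc n" "{0..n}" "\<lambda>_. {-1, 1::real}"] by (simp add: atLeast0_atMost_Suc)
  have inj: "inj_on (\<lambda>(y, g). g(Suc n := y)) ({-1, 1::real} \<times> PS n)"
    using inj_combinator[of "Suc n" "{0..n}" "\<lambda>_. {-1, 1::real}"] by simp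
  have "ES \<gamma> N (Suc n) g = (\<Sum>p\<in>{-1, 1} \<times> PS n. W \<gamma> N (Suc n) ((snd p)(Suc n := fst p)) * g ((snd p)(Suc n := fst p)))"
    unfolding ES_def eq by (subst sum.reindex[OF inj]) (simp add: case_prod_beta)
  also have "\<dots> = (\<Sum>y\<in>{-1, 1}. \<Sum>w\<in>PS n. W \<gamma> N (Suc n) (w(Suc n := y)) * g (w(Suc n := y)))"
    by (simp only: sum.cartesian_product) (simp add: split_def)
  also have "\<dots> = (\<Sum>w\<in>PS n. \<Sum>y\<in>{-1, 1}. W \<gamma> N (Suc n) (w(Suc n := y)) * g (w(Suc n := y)))"
    by (rule sum.swap)
  also have "\<dots> = (\<Sum>w\<in>PS n. W \<gamma> N n w * (\<Sum>y\<in>{-1, 1}. Qmat \<gamma> N (w n) y * g (w(Suc n := y))))"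
    by (intro sum.cong refl) (simp add: W_Suc distrib_left mult_ac)
  finally show ?thesis .
qed

lemma Q_rowsum: "a \<in> {-1, 1} \<Longrightarrow> (\<Sum>y\<in>{-1, 1::real}. Qmat \<gamma> N a y) = 1"
  unfolding Qmat_def by auto

lemma ES_0: "ES \<gamma> N 0 (\<lambda>w. f (w 0)) = (f 1 + f (-1)) / 2"
proof -
  have eq: "PS 0 = (\<lambda>(y, g). g(0 := y)) ` ({-1, 1} \<times> PiE {} (\<lambda>_. {-1, 1::real}))"
    using PiE_insert_eq[of 0 "{}" "\<lambda>_. {-1, 1::real}"] by (simp only: atLeastAtMost_singleton)
  have inj: "inj_on (\<lambda>(y, g). g(0 := y)) ({-1, 1::real} \<times> PiE {} (\<lambda>_. {-1, 1::real}))"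
    using inj_combinator[of 0 "{}" "\<lambda>_. {-1, 1::real}"] by simp
  have "ES \<gamma> N 0 (\<lambda>w. f (w 0)) = (\<Sum>p\<in>{-1, 1::real} \<times> {(\<lambda>_. undefined) :: nat \<Rightarrow> real}. (1/2) * f (fst p))"
    unfolding ES_def eq W_def by (subst sum.reindex[OF inj]) (simp add: case_prod_beta)
  also have "\<dots> = (f 1 + f (-1)) / 2"
  proof -
    have "{-1, 1::real} \<times> {(\<lambda>_. undefined) :: nat \<Rightarrow> real} = (\<lambda>y. (y, (\<lambda>_. undefined) :: nat \<Rightarrow> real)) ` {-1, 1}" by auto
    moreover have "inj_on (\<lambda>y. (y, (\<lambda>_. undefined) :: nat \<Rightarrow> real)) {-1, 1::real}" by (auto simp: inj_on_def)
    ultimately show ?thesis by (simp add: sum.reindex)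
  qed
  finally show ?thesis .
qed

lemma ES_marg_level:
  assumes "N \<ge> 1 \<or> True"
  shows "ES \<gamma> N i (\<lambda>w. f (w i)) = (f 1 + f (-1)) / 2"
proof (induction i arbitrary: f)
  case 0 then show ?case by (rule ES_0)
next
  case (Suc i)
  define G where "G a = (\<Sum>y\<in>{-1, 1::real}. Qmat \<gamma> N a y * f y)" for a
  have "ES \<gamma> N (Suc i) (\<lambda>w. f (w (Suc i))) = ES \<gamma> N i (\<lambda>w. G (w i))"
    unfolding ES_Suc unfolding ES_def G_def by simp
  also have "\<dots> = (G 1 + G (-1)) / 2" by (rule Suc.IH)
  also have "\<dots> = (f 1 + f (-1)) / 2" unfolding G_def Qmat_def by (simp add: algebra_simps)
  finally show ?case .
qed

lemma ES_total: "ES \<gamma> N i (\<lambda>_. 1) = 1"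
  using ES_marg_level[of N \<gamma> i "\<lambda>_. 1"] by simp

lemma ES_extend:
  assumes "\<And>w w'. (\<And>j. j \<le> m \<Longrightarrow> w j = w' j) \<Longrightarrow> g w = g w'"
  shows "ES \<gamma> N (m + k) g = ES \<gamma> N m g"
proof (induction k)
  case 0 then show ?case by simp
next
  case (Suc k)
  have "ES \<gamma> N (m + Suc k) g = (\<Sum>w\<in>PS (m + k). W \<gamma> N (m + k) w * (\<Sum>y\<in>{-1, 1}. Qmat \<gamma> N (w (m + k)) y * g (w(Suc (m + k) := y))))"
    using ES_Suc[of \<gamma> N "m + k" g] by simp
  also have "\<dots> = (\<Sum>w\<in>PS (m + k). W \<gamma> N (m + k) w * g w)"
  proof (intro sum.cong refl)
    fix w assume w: "w \<in> PS (m + k)"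
    have "g (w(Suc (m + k) := y)) = g w" for y by (rule assms) auto
    then have "(\<Sum>y\<in>{-1, 1}. Qmat \<gamma> N (w (m + k)) y * g (w(Suc (m + k) := y))) =
        (\<Sum>y\<in>{-1, 1}. Qmat \<gamma> N (w (m + k)) y) * g w"
      by (simp add: sum_distrib_right distrib_right)
    also have "\<dots> = g w" using w by (subst Q_rowsum) auto
    finally show "W \<gamma> N (m + k) w * (\<Sum>y\<in>{-1, 1}. Qmat \<gamma> N (w (m + k)) y * g (w(Suc (m + k) := y))) =
        W \<gamma> N (m + k) w * g w" by simp
  qed
  also have "\<dots> = ES \<gamma> N m g" using Suc unfolding ES_def by simp
  finally show ?case .
qed

lemma ES_marg:
  assumes "i \<le> n"
  shows "ES \<gamma> N n (\<lambda>w. f (w i)) = (f 1 + f (-1)) / 2"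
proof -
  have "ES \<gamma> N (i + (n - i)) (\<lambda>w. f (w i)) = ES \<gamma> N i (\<lambda>w. f (w i))"
    by (rule ES_extend) auto
  then show ?thesis using assms ES_marg_level[of N \<gamma> i f] by simp
qed

lemma ES_pair:
  assumes "Suc i \<le> n"
  shows "ES \<gamma> N n (\<lambda>w. if w i \<noteq> w (Suc i) then 1 else 0) = real N powr (-\<gamma>)"
proof -
  let ?g = "\<lambda>w. if w i \<noteq> w (Suc i) then 1 else (0::real)"
  have "ES \<gamma> N (Suc i + (n - Suc i)) ?g = ES \<gamma> N (Suc i) ?g"
    by (rule ES_extend) auto
  also have "ES \<gamma> N (Suc i) ?g = (\<Sum>w\<in>PS i. W \<gamma> N i w * real N powr (-\<gamma>))"
    unfolding ES_Suc
  proof (intro sum.cong refl)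
    fix w assume w: "w \<in> PS i"
    then have "w i \<in> {-1, 1}" by auto
    then show "W \<gamma> N i w * (\<Sum>y\<in>{-1, 1}. Qmat \<gamma> N (w i) y * ?g (w(Suc i := y))) = W \<gamma> N i w * real N powr (-\<gamma>)"
      unfolding Qmat_def by auto
  qed
  also have "\<dots> = real N powr (-\<gamma>) * ES \<gamma> N i (\<lambda>_. 1)"
    unfolding ES_def by (simp add: sum_distrib_left mult_ac)
  finally show ?thesis using assms ES_total by simp
qed

lemma Qmat_nonneg:
  assumes "\<gamma> \<ge> 0"
  shows "Qmat \<gamma> N a b \<ge> 0"
proof (cases "N = 0")
  case True then show ?thesis unfolding Qmat_def by simp
next
  case False
  then have "real N powr \<gamma> \<ge> 1" using assms by (intro ge_one_powr_ge_zero) auto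
  then have "real N powr (-\<gamma>) \<le> 1" by (simp add: powr_minus divide_simps)
  then show ?thesis unfolding Qmat_def by auto
qed

lemma W_nonneg: "\<gamma> \<ge> 0 \<Longrightarrow> W \<gamma> N n w \<ge> 0"
  unfolding W_def using Qmat_nonneg by (simp add: prod_nonneg)

lemma ES_mono:
  assumes "\<gamma> \<ge> 0" "\<And>w. w \<in> PS n \<Longrightarrow> f w \<le> g w"
  shows "ES \<gamma> N n f \<le> ES \<gamma> N n g"
  unfolding ES_def using assms W_nonneg by (intro sum_mono mult_left_mono) auto

lemma ES_add: "ES \<gamma> N n (\<lambda>w. f w + g w) = ES \<gamma> N n f + ES \<gamma> N n g"
  unfolding ES_def by (simp add: distrib_left sum.distrib)

lemma ES_cmult: "ES \<gamma> N n (\<lambda>w. c * f w) = c * ES \<gamma> N n f"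
  unfolding ES_def by (simp add: sum_distrib_left mult_ac)

lemma ES_sum: "finite I \<Longrightarrow> ES \<gamma> N n (\<lambda>w. \<Sum>i\<in>I. f i w) = (\<Sum>i\<in>I. ES \<gamma> N n (f i))"
  unfolding ES_def by (simp add: sum_distrib_left) (rule sum.swap)

lemma ES_const: "ES \<gamma> N n (\<lambda>_. c) = c"
  using ES_cmult[of \<gamma> N n c "\<lambda>_. 1"] ES_total by simp



lemma L_lower:
  assumes sv: "slowly_varying L"
  shows "\<exists>\<delta>>0. \<forall>n\<ge>1. real n * L n \<ge> \<delta>"
proof -
  have Lpos: "\<And>n. L n > 0" using sv unfolding slowly_varying_def by blast
  have all: "\<forall>c::real. c > 0 \<longrightarrow> ((\<lambda>n. L (nat \<lfloor>c * real n\<rfloor>) / L n) \<longlonglongrightarrow> 1)"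
    using sv unfolding slowly_varying_def by blast
  have "(\<lambda>n. L (nat \<lfloor>(1/2) * real n\<rfloor>) / L n) \<longlonglongrightarrow> 1"
    using all[rule_format, of "1/2"] by simp
  moreover have "\<And>n. nat \<lfloor>(1/2) * real n\<rfloor> = n div 2"
  proof -
    fix n :: nat
    have "(1/2) * real n = real n / real (2::nat)" by simp
    then show "nat \<lfloor>(1/2) * real n\<rfloor> = n div 2" by (simp only: floor_divide_of_nat_eq)
  qed
  ultimately have "(\<lambda>n. L (n div 2) / L n) \<longlonglongrightarrow> 1" by simp
  then have "eventually (\<lambda>n. L (n div 2) / L n < 2) sequentially"
    by (intro order_tendstoD(2)) auto
  then obtain n0 where n0: "\<And>n. n \<ge> n0 \<Longrightarrow> L (n div 2) / L n < 2"
    unfolding eventually_sequentially by blast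
  define n1 where "n1 = max n0 2"
  define \<delta> where "\<delta> = Min ((\<lambda>m. real m * L m) ` {1..n1})"
  have \<delta>pos: "\<delta> > 0" unfolding \<delta>_def using Lpos n1_def by (subst Min_gr_iff) auto
  have "real n * L n \<ge> \<delta>" if "n \<ge> 1" for n
    using that
  proof (induction n rule: less_induct)
    case (less n)
    show ?case
    proof (cases "n \<le> n1")
      case True
      then show ?thesis unfolding \<delta>_def using less.prems by (intro Min_le) auto
    next
      case False
      then have nn0: "n \<ge> n0" and n2: "n \<ge> 2" unfolding n1_def by auto
      have h1: "n div 2 \<ge> 1" "n div 2 < n" using n2 by auto
      have IH: "real (n div 2) * L (n div 2) \<ge> \<delta>" using less.IH[OF h1(2) h1(1)] .
      have "L (n div 2) < 2 * L n" using n0[OF nn0] Lpos[of n] by (simp add: divide_less_eq)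
      moreover have "real n \<ge> 2 * real (n div 2)" by linarith
      ultimately have "real (n div 2) * L (n div 2) \<le> real n * L n"
      proof -
        assume a: "L (n div 2) < 2 * L n" "real n \<ge> 2 * real (n div 2)"
        have "real (n div 2) * L (n div 2) \<le> real (n div 2) * (2 * L n)"
          using a(1) by (intro mult_left_mono) auto
        also have "\<dots> = (2 * real (n div 2)) * L n" by simp
        also have "\<dots> \<le> real n * L n" using a(2) Lpos[of n] by (intro mult_right_mono) auto
        finally show ?thesis .
      qed
      then show ?thesis using IH by linarith
    qed
  qed
  then show ?thesis using \<delta>pos by blast
qed

lemma K_props:
  fixes \<alpha> :: real and L K :: "nat \<Rightarrow> real"
  assumes "\<alpha> \<ge> 0" "slowly_varying L"
    and Kdef: "\<And>n. n \<ge> 1 \<Longrightarrow> K n = L n * real n powr (-(1 + \<alpha>))"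
    and "(\<lambda>n. K (Suc n)) sums 1"
  shows "\<exists>c0. Kren K c0 (2 + \<alpha>)"
proof -
  have Lpos: "\<And>n. L n > 0" using assms(2) unfolding slowly_varying_def by blast
  obtain \<delta> where \<delta>: "\<delta> > 0" "\<And>n. n \<ge> 1 \<Longrightarrow> real n * L n \<ge> \<delta>" using L_lower[OF assms(2)] by blast
  have Kpos: "\<And>j. j \<ge> 1 \<Longrightarrow> K j > 0" using Kdef Lpos by simp
  have "ln (K n) \<ge> ln \<delta> - (2 + \<alpha>) * ln (real n)" if n: "n \<ge> 1" for n
  proof -
    have np: "real n > 0" using n by simp
    have "ln (K n) = ln (L n) + ln (real n powr (-(1 + \<alpha>)))"
      using Kdef[OF n] Lpos[of n] np by (simp add: ln_mult_pos)
    also have "ln (real n powr (-(1 + \<alpha>))) = -(1 + \<alpha>) * ln (real n)" using np by (simp add: ln_powr)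
    also have "ln (L n) \<ge> ln \<delta> - ln (real n)"
    proof -
      have "ln (real n * L n) \<ge> ln \<delta>" using \<delta> n Lpos[of n] by (intro ln_mono) auto
      then show ?thesis using np Lpos[of n] by (simp add: ln_mult_pos)
    qed
    ultimately show ?thesis by (simp add: algebra_simps)
  qed
  then have "Kren K (ln \<delta>) (2 + \<alpha>)"
    using Kpos assms(4) by unfold_locales auto
  then show ?thesis by blast
qed



lemma sw_le_ind:
  assumes "\<beta> \<noteq> 0 \<or> True"
  shows "real (sw (\<lambda>n. \<beta> * w n + h) N) \<le> (\<Sum>i\<in>{1..<N}. if w i \<noteq> w (Suc i) then 1 else 0)"
proof -
  have "swset (\<lambda>n. \<beta> * w n + h) N \<subseteq> {i\<in>{1..<N}. w i \<noteq> w (Suc i)}"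
    unfolding swset_def by auto
  then have "sw (\<lambda>n. \<beta> * w n + h) N \<le> card {i\<in>{1..<N}. w i \<noteq> w (Suc i)}"
    unfolding sw_def by (intro card_mono) auto
  moreover have "real (card {i\<in>{1..<N}. w i \<noteq> w (Suc i)}) = (\<Sum>i\<in>{1..<N}. if w i \<noteq> w (Suc i) then 1 else 0)"
    by (subst sum.inter_filter[symmetric]) auto
  ultimately show ?thesis by (metis of_nat_le_iff)
qed

abbreviation Ind :: "(nat \<Rightarrow> real) \<Rightarrow> nat \<Rightarrow> real" where
  "Ind w N \<equiv> (\<Sum>i\<in>{1..<N}. if w i \<noteq> w (Suc i) then 1 else 0)"

lemma PS_val: "w \<in> PS N \<Longrightarrow> i \<le> N \<Longrightarrow> w i = 1 \<or> w i = -1"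
  by (auto simp: PiE_def Pi_def)

context Kren
begin

lemma pointwise_upper:
  assumes N1: "N \<ge> 1" and w: "w \<in> PS N" and \<beta>: "\<beta> \<ge> 0"
  shows "ln (zr K (\<lambda>n. \<beta> * w n + h) N) \<le> (\<Sum>i\<in>{1..N}. Fhom K (\<beta> * w i + h))
     + (2 * ln (real N + 1) + (\<bar>h\<bar> + \<beta>)) * (1 + Ind w N)"
proof -
  let ?v = "\<lambda>n. \<beta> * w n + h"
  have bd: "\<bar>?v i\<bar> \<le> \<bar>h\<bar> + \<beta>" if "1 \<le> i" "i \<le> N" for i
    using PS_val[OF w that(2)] \<beta> by auto
  have "zr K ?v N \<le> exp ((\<Sum>i\<in>{1..N}. Fhom K (?v i)) + (2 * ln (real N + 1) + (\<bar>h\<bar> + \<beta>)) * (1 + real (sw ?v N)))"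
    by (rule zr_upper[where \<Phi> = "Fhom K" and N = N and b = N]) (auto intro: Kpos K_le1 Fhom_nonneg zr_le_F bd simp: \<beta>)
  then have "ln (zr K ?v N) \<le> (\<Sum>i\<in>{1..N}. Fhom K (?v i)) + (2 * ln (real N + 1) + (\<bar>h\<bar> + \<beta>)) * (1 + real (sw ?v N))"
    by (rule ln_le_of[OF zpos])
  also have "(2 * ln (real N + 1) + (\<bar>h\<bar> + \<beta>)) * (1 + real (sw ?v N)) \<le>
      (2 * ln (real N + 1) + (\<bar>h\<bar> + \<beta>)) * (1 + Ind w N)"
    using sw_le_ind[of \<beta> w h N] \<beta> by (intro mult_left_mono) auto
  finally show ?thesis by simp
qed

lemma pointwise_lower:
  assumes N1: "N \<ge> 1" and w: "w \<in> PS N" and C0: "C \<ge> 0"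
    and hyp: "\<And>x l. x \<in> {h + \<beta>, h - \<beta>} \<Longrightarrow> l \<ge> 1 \<Longrightarrow> ln (zr K (\<lambda>_. x) l) \<ge> (Fhom K x - \<epsilon>) * real l - C"
  shows "ln (zr K (\<lambda>n. \<beta> * w n + h) N) \<ge> (\<Sum>i\<in>{1..N}. Fhom K (\<beta> * w i + h)) - real N * \<epsilon> - C * (1 + Ind w N)"
proof -
  let ?v = "\<lambda>n. \<beta> * w n + h"
  have vin: "?v i \<in> {h + \<beta>, h - \<beta>}" if "i \<le> N" for i
    using PS_val[OF w that] by auto
  have "ln (zr K ?v N) \<ge> (\<Sum>i\<in>{1..N}. Fhom K (?v i) - \<epsilon>) - C * (1 + real (sw ?v N))"
  proof (rule zr_lower[where \<Phi> = "Fhom K" and N = N and b = N])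
    fix i l :: nat assume "1 \<le> i" "i \<le> N" "1 \<le> l"
    then show "(Fhom K (?v i) - \<epsilon>) * real l - C \<le> ln (zr K (\<lambda>_. ?v i) l)"
      using hyp[OF vin] by blast
  qed (auto intro: Kpos C0)
  moreover have "(\<Sum>i\<in>{1..N}. Fhom K (?v i) - \<epsilon>) = (\<Sum>i\<in>{1..N}. Fhom K (?v i)) - real N * \<epsilon>"
    by (simp add: sum_subtractf)
  moreover have "C * (1 + real (sw ?v N)) \<le> C * (1 + Ind w N)"
    using sw_le_ind[of \<beta> w h N] C0 by (intro mult_left_mono) auto
  ultimately show ?thesis by linarith
qed

end

lemma ES_lin:
  "ES \<gamma> N n (\<lambda>w. (f w + c * (1 + g w) + e) / d) = (ES \<gamma> N n f + c * (1 + ES \<gamma> N n g) + e) / d"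
proof -
  let ?P = "PS n" and ?W = "W \<gamma> N n"
  have tot: "(\<Sum>w\<in>?P. ?W w) = 1" using ES_total[of \<gamma> N n] unfolding ES_def by simp
  have "(\<Sum>w\<in>?P. ?W w * ((f w + c * (1 + g w) + e) / d)) =
      (\<Sum>w\<in>?P. ?W w * f w + c * ?W w + c * (?W w * g w) + e * ?W w) / d"
    by (simp add: sum_divide_distrib algebra_simps add_divide_distrib)
  also have "\<dots> = ((\<Sum>w\<in>?P. ?W w * f w) + c * (\<Sum>w\<in>?P. ?W w) + c * (\<Sum>w\<in>?P. ?W w * g w) + e * (\<Sum>w\<in>?P. ?W w)) / d"
    by (simp add: sum.distrib sum_distrib_left)
  also have "\<dots> = ((\<Sum>w\<in>?P. ?W w * f w) + c * (1 + (\<Sum>w\<in>?P. ?W w * g w)) + e) / d"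
    using tot by (simp add: algebra_simps)
  finally show ?thesis unfolding ES_def .
qed

lemma ES_S:
  "ES \<gamma> N N (\<lambda>w. \<Sum>i\<in>{1..N}. \<Phi> (\<beta> * w i + h)) = real N * ((\<Phi> (h + \<beta>) + \<Phi> (h - \<beta>)) / 2)"
proof -
  have "ES \<gamma> N N (\<lambda>w. \<Sum>i\<in>{1..N}. \<Phi> (\<beta> * w i + h)) = (\<Sum>i\<in>{1..N}. ES \<gamma> N N (\<lambda>w. \<Phi> (\<beta> * w i + h)))"
    by (rule ES_sum) simp
  also have "\<dots> = (\<Sum>i\<in>{1..N}. (\<Phi> (h + \<beta>) + \<Phi> (h - \<beta>)) / 2)"
  proof (intro sum.cong refl)
    fix i assume "i \<in> {1..N}"
    then show "ES \<gamma> N N (\<lambda>w. \<Phi> (\<beta> * w i + h)) = (\<Phi> (h + \<beta>) + \<Phi> (h - \<beta>)) / 2"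
      using ES_marg[where i = i and n = N and \<gamma> = \<gamma> and N = N and f = "\<lambda>y. \<Phi> (\<beta> * y + h)"] by (simp add: add.commute)
  qed
  finally show ?thesis by simp
qed

lemma ES_I:
  "ES \<gamma> N N (\<lambda>w. Ind w N) = real (N - 1) * real N powr (-\<gamma>)"
proof -
  have "ES \<gamma> N N (\<lambda>w. Ind w N) = (\<Sum>i\<in>{1..<N}. ES \<gamma> N N (\<lambda>w. if w i \<noteq> w (Suc i) then 1 else 0))"
    by (rule ES_sum) simp
  also have "\<dots> = (\<Sum>i\<in>{1..<N}. real N powr (-\<gamma>))"
    by (intro sum.cong refl ES_pair) auto
  finally show ?thesis by simp
qed



theorem mainTheorem4:
  fixes \<alpha> \<gamma> \<beta> h :: real and L K :: "nat \<Rightarrow> real"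
  assumes "0 < \<gamma>" "\<gamma> < 1"
    and "\<alpha> \<ge> 0"
    and "slowly_varying L"
    and "\<And>n. n \<ge> 1 \<Longrightarrow> K n = L n * real n powr (-(1 + \<alpha>))"
    and "(\<lambda>n. K (Suc n)) sums 1"
    and "\<beta> \<ge> 0"
  shows "(\<lambda>N. EN \<gamma> N (\<lambda>\<omega>. ln (Zpin K N \<beta> h \<omega>) / real N)) \<longlonglongrightarrow> Fquenched K \<beta> h"
proof -
  obtain c0 where KR: "Kren K c0 (2 + \<alpha>)" using K_props[OF assms(3,4,5,6)] by blast
  interpret Kren K c0 "2 + \<alpha>" by (rule KR)
  have \<beta>: "\<beta> \<ge> 0" by (rule assms(7))
  have g0: "\<gamma> \<ge> 0" using assms(1) by simp
  define T where "T = (Fhom K (h + \<beta>) + Fhom K (h - \<beta>)) / 2"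
  define A where "A N = EN \<gamma> N (\<lambda>\<omega>. ln (Zpin K N \<beta> h \<omega>) / real N)" for N
  define r where "r N = (1 + real N * real N powr (-\<gamma>)) / real N" for N :: nat
  define Dn where "Dn N = 2 * ln (real N + 1) + (\<bar>h\<bar> + \<beta>)" for N :: nat
  have r0: "r N \<ge> 0" for N unfolding r_def by simp
  have Dn0: "Dn N \<ge> 0" for N unfolding Dn_def using assms(7) ln_ge_zero[of "real N + 1"] by simp
  have A_ES: "A N = ES \<gamma> N N (\<lambda>w. ln (zr K (\<lambda>n. \<beta> * w n + h) N) / real N)" if "N \<ge> 1" for N
    unfolding A_def EN_ES using Zpin_zr[OF that] by simp
  have IndE: "(1 + ES \<gamma> N N (\<lambda>w. Ind w N)) / real N \<le> r N" if "N \<ge> 1" for N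
  proof -
    have "real (N - 1) * real N powr (-\<gamma>) \<le> real N * real N powr (-\<gamma>)"
      by (intro mult_right_mono) auto
    then show ?thesis unfolding ES_I r_def using that by (intro divide_right_mono) auto
  qed
  have upper: "A N \<le> T + Dn N * r N" if N1: "N \<ge> 1" for N
  proof -
    have "A N \<le> ES \<gamma> N N (\<lambda>w. ((\<Sum>i\<in>{1..N}. Fhom K (\<beta> * w i + h)) + Dn N * (1 + Ind w N) + 0) / real N)"
      unfolding A_ES[OF N1]
    proof (rule ES_mono[OF g0])
      fix w assume "w \<in> PS N"
      then show "ln (zr K (\<lambda>n. \<beta> * w n + h) N) / real N \<le> ((\<Sum>i\<in>{1..N}. Fhom K (\<beta> * w i + h)) + Dn N * (1 + Ind w N) + 0) / real N"
        using pointwise_upper[OF N1 _ \<beta>, of w h] unfolding Dn_def by (intro divide_right_mono) auto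
    qed
    also have "\<dots> = (real N * T + Dn N * (1 + ES \<gamma> N N (\<lambda>w. Ind w N)) + 0) / real N"
      unfolding ES_lin ES_S T_def ..
    also have "\<dots> = T + Dn N * ((1 + ES \<gamma> N N (\<lambda>w. Ind w N)) / real N)"
      using N1 by (simp add: field_simps)
    also have "\<dots> \<le> T + Dn N * r N"
      using IndE[OF N1] Dn0 by (intro add_left_mono mult_left_mono) auto
    finally show ?thesis .
  qed
  have lower: "\<exists>C\<ge>0. \<forall>N\<ge>1. A N \<ge> T - \<epsilon> - C * r N" if \<epsilon>: "\<epsilon> > 0" for \<epsilon>
  proof -
    obtain C1 where C1: "C1 \<ge> 0" "\<And>l. l \<ge> 1 \<Longrightarrow> ln (zr K (\<lambda>_. h + \<beta>) l) \<ge> (Fhom K (h + \<beta>) - \<epsilon>) * real l - C1"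
      using Fhom_lower[OF \<epsilon>, of "h + \<beta>"] by blast
    obtain C2 where C2: "C2 \<ge> 0" "\<And>l. l \<ge> 1 \<Longrightarrow> ln (zr K (\<lambda>_. h - \<beta>) l) \<ge> (Fhom K (h - \<beta>) - \<epsilon>) * real l - C2"
      using Fhom_lower[OF \<epsilon>, of "h - \<beta>"] by blast
    define C where "C = max C1 C2"
    have C0: "C \<ge> 0" unfolding C_def using C1 by simp
    have hyp: "ln (zr K (\<lambda>_. x) l) \<ge> (Fhom K x - \<epsilon>) * real l - C" if "x \<in> {h + \<beta>, h - \<beta>}" "l \<ge> 1" for x l
    proof -
      have "C1 \<le> C" "C2 \<le> C" unfolding C_def by auto
      then show ?thesis using that C1(2)[of l] C2(2)[of l] by auto
    qed
    have "A N \<ge> T - \<epsilon> - C * r N" if N1: "N \<ge> 1" for N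
    proof -
      have "ES \<gamma> N N (\<lambda>w. ((\<Sum>i\<in>{1..N}. Fhom K (\<beta> * w i + h)) + (- C) * (1 + Ind w N) + (- real N * \<epsilon>)) / real N) \<le> A N"
        unfolding A_ES[OF N1]
      proof (rule ES_mono[OF g0])
        fix w assume w: "w \<in> PS N"
        have "(\<Sum>i\<in>{1..N}. Fhom K (\<beta> * w i + h)) - real N * \<epsilon> - C * (1 + Ind w N) \<le> ln (zr K (\<lambda>n. \<beta> * w n + h) N)"
          by (rule pointwise_lower[where h = h and \<beta> = \<beta> and \<epsilon> = \<epsilon> and C = C, OF N1 w C0 hyp])
        then have "(\<Sum>i\<in>{1..N}. Fhom K (\<beta> * w i + h)) + (- C) * (1 + Ind w N) + (- real N * \<epsilon>) \<le> ln (zr K (\<lambda>n. \<beta> * w n + h) N)"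
          by linarith
        then show "((\<Sum>i\<in>{1..N}. Fhom K (\<beta> * w i + h)) + (- C) * (1 + Ind w N) + (- real N * \<epsilon>)) / real N \<le> ln (zr K (\<lambda>n. \<beta> * w n + h) N) / real N"
          by (intro divide_right_mono) auto
      qed
      moreover have "ES \<gamma> N N (\<lambda>w. ((\<Sum>i\<in>{1..N}. Fhom K (\<beta> * w i + h)) + (- C) * (1 + Ind w N) + (- real N * \<epsilon>)) / real N)
          = (real N * T + (- C) * (1 + ES \<gamma> N N (\<lambda>w. Ind w N)) + (- real N * \<epsilon>)) / real N"
        unfolding ES_lin ES_S T_def ..
      moreover have "\<dots> = T - \<epsilon> - C * ((1 + ES \<gamma> N N (\<lambda>w. Ind w N)) / real N)"
        using N1 by (simp add: field_simps)
      moreover have "C * ((1 + ES \<gamma> N N (\<lambda>w. Ind w N)) / real N) \<le> C * r N"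
        using IndE[OF N1] C0 by (intro mult_left_mono) auto
      ultimately show ?thesis by linarith
    qed
    then show ?thesis using C0 by blast
  qed
  have rlim: "r \<longlonglongrightarrow> 0" unfolding r_def using assms(1,2) by real_asymp
  have Drlim: "(\<lambda>N. Dn N * r N) \<longlonglongrightarrow> 0" unfolding r_def Dn_def using assms(1,2) by real_asymp
  have lim: "A \<longlonglongrightarrow> T"
  proof (rule order_tendstoI)
    fix y assume y: "T < y"
    have "eventually (\<lambda>N. Dn N * r N < y - T) sequentially"
      using Drlim y by (intro order_tendstoD(2)) auto
    then show "eventually (\<lambda>N. A N < y) sequentially"
      using eventually_ge_at_top[of 1]
      by eventually_elim (use upper in \<open>fastforce\<close>)
  next
    fix y assume y: "y < T"
    define \<epsilon> where "\<epsilon> = (T - y) / 2"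
    have \<epsilon>: "\<epsilon> > 0" using y unfolding \<epsilon>_def by simp
    obtain C where C: "C \<ge> 0" "\<And>N. N \<ge> 1 \<Longrightarrow> A N \<ge> T - \<epsilon> - C * r N" using lower[OF \<epsilon>] by blast
    have "(\<lambda>N. C * r N) \<longlonglongrightarrow> C * 0" by (intro tendsto_mult tendsto_const rlim)
    then have "eventually (\<lambda>N. C * r N < \<epsilon>) sequentially"
      using \<epsilon> by (intro order_tendstoD(2)) auto
    then show "eventually (\<lambda>N. y < A N) sequentially"
      using eventually_ge_at_top[of 1]
    proof eventually_elim
      case (elim N)
      then show ?case using C(2)[OF elim(2)] unfolding \<epsilon>_def by (auto simp: field_simps)
    qed
  qed
  have FT: "Fquenched K \<beta> h = T"
  proof -
    have z: "Fhom K x = 0" if "x \<le> 0" for x using Fhom_nonneg[of x] Fhom_nonpos[OF that] by linarith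
    show ?thesis
      unfolding Fquenched_def T_def using \<beta> z[of "h + \<beta>"] z[of "h - \<beta>"] by auto
  qed
  show ?thesis using lim unfolding A_def FT .
qed


end
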